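(* For every integer $k\ge 1$ there exists an odd integer $N\ge 3$ such that the cycle $C_N$ is a strict prime $k$th-power distance graph.
   Context: A graph $G$ is a strict prime $k$th-power distance graph if there is an injective map $L:V(G)\to\mathbb{Z}$ such that for every edge $uv$ of $G$, $|L(u)-L(v)|=p^k$ for some prime $p$ (the prime may depend on the edge). *)

theory Defs
  imports Main "HOL-Computational_Algebra.Primes"
begin

definition strict_prime_power_distance_graph ::
  "nat \<Rightarrow> 'a set \<Rightarrow> ('a \<Rightarrow> 'a \<Rightarrow> bool) \<Rightarrow> bool" where
  "strict_prime_power_distance_graph k V E \<longleftrightarrow>
     (\<exists>L :: 'a \<Rightarrow> int. inj_on L V \<and>
        (\<forall>u\<in>V. \<forall>v\<in>V. E u v \<longrightarrow>
           (\<exists>p :: nat. prime p \<and> \<bar>L u - L v\<bar> = int p ^ k)))"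

definition cycle_vertices :: "nat \<Rightarrow> nat set" where
  "cycle_vertices N = {0..<N}"

definition cycle_edge :: "nat \<Rightarrow> nat \<Rightarrow> nat \<Rightarrow> bool" where
  "cycle_edge N u v \<longleftrightarrow> u < N \<and> v < N \<and> (v = (u + 1) mod N \<or> u = (v + 1) mod N)"

end

theory Submission
  imports Defs
begin

lemma key_nocoll:
  fixes A B i t :: nat
  assumes cop: "coprime A B" and t: "0 < t" "t < B" and eq: "i * B + t * A = A * B"
  shows False
proof -
  have "B dvd t * A" using eq
    by (metis dvd_add_right_iff dvd_triv_left dvd_triv_right mult.commute)
  hence "B dvd t" using cop
    by (metis coprime_commute coprime_dvd_mult_left_iff)
  thus False using t by (simp add: nat_dvd_not_less)
qed

theorem mainTheorem15:
  fixes k :: nat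
  assumes "k \<ge> 1"
  shows "\<exists>N::nat. odd N \<and> N \<ge> 3 \<and>
           strict_prime_power_distance_graph k (cycle_vertices N) (cycle_edge N)"
proof -
  define A :: nat where "A = 3^k"
  define B :: nat where "B = 2^k"
  define N where "N = A + B"
  have A3: "A \<ge> 3" unfolding A_def using assms
    by (metis power_increasing power_one_right zero_less_numeral one_le_numeral)
  have B2: "B \<ge> 2" unfolding B_def using assms
    by (metis power_increasing power_one_right one_le_numeral)
  have cop: "coprime A B" unfolding A_def B_def
    by (intro coprime_power_left_iff[THEN iffD2] coprime_power_right_iff[THEN iffD2]) auto
  have oddN: "odd N" unfolding N_def A_def B_def using assms by simp
  define L :: "nat \<Rightarrow> int" where
    "L i = (if i \<le> A then int i * int B else int A * int B - int (i - A) * int A)" for i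
  have inj: "inj_on L {0..<N}"
  proof (rule inj_onI)
    fix i j assume i: "i \<in> {0..<N}" and j: "j \<in> {0..<N}" and e: "L i = L j"
    have cross: False if "x \<le> A" "y > A" "y < N" "L x = L y" for x y
    proof -
      have "int x * int B = int A * int B - int (y - A) * int A"
        using that unfolding L_def by simp
      hence "int (x * B + (y - A) * A) = int (A * B)" by simp
      hence "x * B + (y - A) * A = A * B" by (simp only: of_nat_eq_iff)
      moreover have "0 < y - A" "y - A < B" using that unfolding N_def by auto
      ultimately show False using key_nocoll[OF cop, of "y - A" x] by blast
    qed
    show "i = j"
    proof (cases "i \<le> A")
      case True
      show ?thesis
      proof (cases "j \<le> A")
        case True thus ?thesis using \<open>i \<le> A\<close> e B2 unfolding L_def by simp
      next
        case False thus ?thesis using cross[of i j] True e j by auto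
      qed
    next
      case False
      show ?thesis
      proof (cases "j \<le> A")
        case True thus ?thesis using cross[of j i] False e i by auto
      next
        case False2: False
        hence "int (i - A) * int A = int (j - A) * int A"
          using False e unfolding L_def by simp
        thus ?thesis using False False2 A3 by simp
      qed
    qed
  qed
  have p2: "prime (2::nat)" by simp
  have p3: "prime (3::nat)" by simp
  have edge: "\<exists>p::nat. prime p \<and> \<bar>L u - L v\<bar> = int p ^ k"
    if "cycle_edge N u v" for u v
  proof -
    have step: "\<bar>L u - L ((u + 1) mod N)\<bar> = int B \<or> \<bar>L u - L ((u + 1) mod N)\<bar> = int A"
      if "u < N" for u
    proof (cases "u + 1 < N")
      case True
      hence m: "(u + 1) mod N = u + 1" by simp
      show ?thesis
      proof (cases "u < A")
        case True thus ?thesis unfolding m L_def by (simp add: algebra_simps)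
      next
        case False
        hence "Suc u - A = Suc (u - A)" by simp
        thus ?thesis using False unfolding m L_def by (simp add: algebra_simps)
      qed
    next
      case False
      hence u1: "u + 1 = N" using that by auto
      hence u: "u = N - 1" "(u + 1) mod N = 0" by auto
      have "u - A = B - 1" "\<not> u \<le> A" using u B2 unfolding N_def by auto
      hence "L u = int A" unfolding L_def using B2 by (simp add: algebra_simps of_nat_diff)
      moreover have "L 0 = 0" unfolding L_def by simp
      ultimately show ?thesis using u by simp
    qed
    have "\<bar>L u - L v\<bar> = int B \<or> \<bar>L u - L v\<bar> = int A"
      using that unfolding cycle_edge_def
      by (metis abs_minus_commute step)
    thus ?thesis unfolding A_def B_def using p2 p3 by (metis of_nat_numeral of_nat_power)
  qed
  have "strict_prime_power_distance_graph k (cycle_vertices N) (cycle_edge N)"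
    unfolding strict_prime_power_distance_graph_def cycle_vertices_def
    using inj edge by blast
  moreover have "N \<ge> 3" using A3 B2 unfolding N_def by simp
  ultimately show ?thesis using oddN by blast
qed

end
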